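(* Let $d$ be a positive integer and let $\mu$ be an isotropic Borel probability measure on $\mathbb{S}^{d-1}$ such that $\langle x,y\rangle\ge 0$ for all $x,y$ in the support of $\mu$. Then $\mu$ is the uniform distribution over an orthonormal basis, i.e. $\mu=\frac1d\sum_{j=1}^d\delta_{e_j}$ for some orthonormal basis $e_1,\dots,e_d$ of $\mathbb{R}^d$.
   Context: A Borel probability measure $\mu$ on $\mathbb{S}^{d-1}$ is isotropic if $\int_{\mathbb{S}^{d-1}}xx^T\,d\mu(x)=\frac1d I_d$, equivalently $\int\langle x,y\rangle^2\,d\mu(x)=\frac1d$ for every $y\in\mathbb{S}^{d-1}$. *)

theory Defs
  imports "HOL-Probability.Probability"
begin

definition measure_support :: "'a::topological_space measure \<Rightarrow> 'a set" where
  "measure_support M = {x. \<forall>U. open U \<and> x \<in> U \<longrightarrow> emeasure M U > 0}"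

definition isotropic :: "'a::euclidean_space measure \<Rightarrow> bool" where
  "isotropic M \<longleftrightarrow> (\<forall>y. norm y = 1 \<longrightarrow>
      (\<integral>x. (x \<bullet> y)^2 \<partial>M) = 1 / real DIM('a))"

end

theory Submission
  imports Defs
begin

lemma support_AE:
  fixes M :: "'a::second_countable_topology measure"
  assumes "sets M = sets borel"
  shows "AE x in M. x \<in> measure_support M"
proof -
  obtain B :: "'a set set" where B: "countable B" "\<And>C. C\<in>B \<Longrightarrow> open C"
    "\<And>S. open S \<Longrightarrow> \<exists>U. U \<subseteq> B \<and> S = \<Union>U" using univ_second_countable by blast
  let ?N = "\<Union>b\<in>{b\<in>B. emeasure M b = 0}. b"
  have "?N \<in> null_sets M"
    by (rule null_sets_UN') (use B assms in auto)
  moreover have "{x\<in>space M. \<not> x \<in> measure_support M} \<subseteq> ?N"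
  proof
    fix x assume "x \<in> {x\<in>space M. \<not> x \<in> measure_support M}"
    then obtain U where U: "open U" "x\<in>U" "\<not> emeasure M U > 0" by (auto simp: measure_support_def)
    hence U0: "emeasure M U = 0" by (simp add: zero_less_iff_neq_zero)
    obtain W where W: "W \<subseteq> B" "U = \<Union>W" using B(3) U(1) by blast
    then obtain b where b: "b\<in>W" "x\<in>b" using U by auto
    have "emeasure M b \<le> emeasure M U"
      by (rule emeasure_mono) (use W b U assms in auto)
    thus "x \<in> ?N" using U0 W b by auto
  qed
  ultimately show ?thesis by (rule AE_I')
qed

lemma AE_open_support:
  assumes "sets M = sets borel" "open U" "AE x in M. x \<notin> U"
  shows "U \<inter> measure_support M = {}"
proof -
  have U: "U \<in> sets M" using assms by simp
  have "{x\<in>space M. \<not> x \<notin> U} = U" using sets.sets_into_space[OF U] by auto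
  hence "emeasure M U = 0" using AE_iff_measurable[of U M "\<lambda>x. x \<notin> U"] assms U by simp
  thus ?thesis using assms(2) by (auto simp: measure_support_def)
qed


lemma sq_le_self: "0 \<le> t \<Longrightarrow> t \<le> 1 \<Longrightarrow> t^2 \<le> (t::real)"
  by (simp add: power2_eq_square mult_left_le)

theorem theorem5p1:
  fixes mu :: "'a::euclidean_space measure"
  assumes "prob_space mu"
    and "sets mu = sets borel"
    and "emeasure mu (sphere 0 1) = 1"
    and "isotropic mu"
    and "\<forall>x\<in>measure_support mu. \<forall>y\<in>measure_support mu. x \<bullet> y \<ge> 0"
  shows "\<exists>B. finite B \<and> card B = DIM('a) \<and> span B = UNIV \<and>
              pairwise orthogonal B \<and> (\<forall>e\<in>B. norm e = 1) \<and>
              (\<forall>A\<in>sets mu. emeasure mu A = ennreal (real (card (A \<inter> B)) / real DIM('a)))"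
proof -
  interpret P: prob_space mu by fact
  define S where "S = measure_support mu"
  define d where "d = real DIM('a)"
  have d1: "d \<ge> 1" unfolding d_def using DIM_positive[where 'a='a] by linarith
  have mc: "measurable mu N = measurable borel N" for N :: "'b measure"
    using measurable_cong_sets[OF assms(2) refl] .
  have spc: "space mu = UNIV" using sets_eq_imp_space_eq[OF assms(2)] by simp
  have AES: "AE x in mu. x \<in> S" using support_AE[OF assms(2)] S_def by simp
  have "measure mu (sphere (0::'a) 1) = 1" using assms(3) P.emeasure_eq_measure by simp
  hence "AE x in mu. x \<in> sphere 0 1" by (rule P.AE_prob_1)
  hence AE1: "AE x in mu. norm x = 1" by (rule eventually_mono) simp
  have Sunit: "norm x = 1" if "x \<in> S" for x
  proof -
    have "{x::'a. norm x \<noteq> 1} \<inter> S = {}" unfolding S_def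
      by (rule AE_open_support[OF assms(2)]) (auto intro!: open_Collect_neq continuous_intros
          intro: eventually_mono[OF AE1])
    thus ?thesis using that by auto
  qed
  have Spos: "0 \<le> x \<bullet> y" if "x \<in> S" "y \<in> S" for x y using assms(5) that S_def by auto
  have Sle: "x \<bullet> y \<le> 1" if "x \<in> S" "y \<in> S" for x y
    using norm_cauchy_schwarz[of x y] Sunit that by simp
  have int_inner: "integrable mu (\<lambda>x. x \<bullet> y)" for y
  proof (rule P.integrable_const_bound[where B="norm y"])
    show "AE x in mu. norm (x \<bullet> y) \<le> norm y"
      using AE1 by (rule eventually_mono) (metis Cauchy_Schwarz_ineq2 mult_1_left real_norm_def)
    show "(\<lambda>x. x \<bullet> y) \<in> borel_measurable mu" unfolding mc by measurable
  qed
  have int_sq: "integrable mu (\<lambda>x. (x \<bullet> y)^2)" for y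
  proof (rule P.integrable_const_bound[where B="(norm y)^2"])
    show "AE x in mu. norm ((x \<bullet> y)^2) \<le> (norm y)^2"
      using AE1
    proof (rule eventually_mono)
      fix x :: 'a assume "norm x = 1"
      hence "\<bar>x \<bullet> y\<bar> \<le> \<bar>norm y\<bar>" using Cauchy_Schwarz_ineq2[of x y] by simp
      thus "norm ((x \<bullet> y)^2) \<le> (norm y)^2" using abs_le_square_iff[of "x \<bullet> y" "norm y"] by simp
    qed
    show "(\<lambda>x. (x \<bullet> y)^2) \<in> borel_measurable mu" unfolding mc by measurable
  qed
  have int_id: "integrable mu (\<lambda>x. x)"
  proof (rule P.integrable_const_bound[where B=1])
    show "AE x in mu. norm x \<le> 1" using AE1 by (rule eventually_mono) simp
    show "(\<lambda>x. x) \<in> borel_measurable mu" unfolding mc by measurable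
  qed
  define v where "v = integral\<^sup>L mu (\<lambda>x. x)"
  have vin: "(\<integral>x. x \<bullet> y \<partial>mu) = v \<bullet> y" for y using int_id v_def by simp
  have iso: "(\<integral>x. (x \<bullet> y)^2 \<partial>mu) = 1/d" if "norm y = 1" for y
    using assms(4) that unfolding isotropic_def d_def by simp
  have vS: "1/d \<le> v \<bullet> y" if "y \<in> S" for y
  proof -
    have "1/d = (\<integral>x. (x \<bullet> y)^2 \<partial>mu)" using iso Sunit that by simp
    also have "\<dots> \<le> (\<integral>x. x \<bullet> y \<partial>mu)"
      by (rule integral_mono_AE[OF int_sq int_inner])
        (use AES in \<open>rule eventually_mono\<close>, use sq_le_self Spos Sle that in auto)
    finally show ?thesis using vin by simp
  qed
  have vv: "1/d \<le> v \<bullet> v"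
  proof -
    have "1/d = (\<integral>x. 1/d \<partial>mu)" by (simp add: P.prob_space)
    also have "\<dots> \<le> (\<integral>x. x \<bullet> v \<partial>mu)"
      by (rule integral_mono_AE[OF _ int_inner])
        (simp, use AES in \<open>rule eventually_mono\<close>, use vS in \<open>auto simp: inner_commute\<close>)
    finally show ?thesis using vin by simp
  qed
  have vnz: "v \<noteq> 0" using vv d1 by auto
  define u where "u = v /\<^sub>R norm v"
  have nu: "norm u = 1" using vnz u_def by simp
  have vu: "v \<bullet> u = norm v" using vnz unfolding u_def
    by (simp add: power2_norm_eq_inner[symmetric] power2_eq_square)
  have "0 \<le> P.variance (\<lambda>x. x \<bullet> u)" by (rule P.variance_positive)
  also have "\<dots> = 1/d - (norm v)^2"
    using P.variance_eq[OF int_inner int_sq, of u] iso[OF nu] vin[of u] vu by simp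
  finally have "v \<bullet> v \<le> 1/d" by (simp add: power2_norm_eq_inner)
  hence vv_eq: "v \<bullet> v = 1/d" using vv by simp
  have vS_eq: "v \<bullet> y = 1/d" if "y \<in> S" for y
  proof -
    have int1: "integrable mu (\<lambda>x. v \<bullet> x - 1/d)"
      using int_inner[of v] by (simp add: inner_commute)
    have "(\<integral>x. v \<bullet> x - 1/d \<partial>mu) = v \<bullet> v - 1/d"
      using int_id v_def by (simp add: P.prob_space)
    hence "(\<integral>x. v \<bullet> x - 1/d \<partial>mu) = 0" using vv_eq by simp
    moreover have "AE x in mu. 0 \<le> v \<bullet> x - 1/d"
      using AES by (rule eventually_mono) (use vS in auto)
    ultimately have "AE x in mu. v \<bullet> x - 1/d = 0"
      using integral_nonneg_eq_0_iff_AE[OF int1] by simp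
    hence "{x. v \<bullet> x \<noteq> 1/d} \<inter> S = {}" unfolding S_def
      by (intro AE_open_support[OF assms(2)])
         (auto intro!: open_Collect_neq continuous_intros elim: eventually_mono)
    thus ?thesis using that by auto
  qed
  have Sorth: "x \<bullet> y = 0 \<or> x \<bullet> y = 1" if xy: "x \<in> S" "y \<in> S" for x y
  proof -
    have int1: "integrable mu (\<lambda>x. x \<bullet> y - (x \<bullet> y)^2)"
      using int_inner int_sq by simp
    have "(\<integral>x. x \<bullet> y - (x \<bullet> y)^2 \<partial>mu) = v \<bullet> y - 1/d"
      using int_inner int_sq vin iso Sunit xy by simp
    hence "(\<integral>x. x \<bullet> y - (x \<bullet> y)^2 \<partial>mu) = 0" using vS_eq xy by simp
    moreover have "AE x in mu. 0 \<le> x \<bullet> y - (x \<bullet> y)^2"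
      using AES by (rule eventually_mono) (use sq_le_self Spos Sle xy in force)
    ultimately have "AE x in mu. x \<bullet> y - (x \<bullet> y)^2 = 0"
      using integral_nonneg_eq_0_iff_AE[OF int1] by simp
    hence "{x. x \<bullet> y - (x \<bullet> y)^2 \<noteq> 0} \<inter> S = {}" unfolding S_def
      by (intro AE_open_support[OF assms(2)])
         (auto intro!: open_Collect_neq continuous_intros elim: eventually_mono)
    hence "x \<bullet> y - (x \<bullet> y)^2 = 0" using xy by auto
    thus ?thesis by (simp add: power2_eq_square algebra_simps)
  qed
  have Seq: "x = y" if xy: "x \<in> S" "y \<in> S" "x \<bullet> y = 1" for x y
  proof -
    have "x \<bullet> x = 1" "y \<bullet> y = 1" using Sunit xy norm_eq_1 by auto
    hence "(x - y) \<bullet> (x - y) = 0" using xy(3)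
      by (simp add: inner_diff_left inner_diff_right inner_commute)
    thus ?thesis by simp
  qed
  have pw: "pairwise orthogonal S"
    unfolding pairwise_def orthogonal_def using Sorth Seq by blast
  have "0 \<notin> S" using Sunit by force
  hence indep: "independent S" using pw pairwise_orthogonal_independent by blast
  have finS: "finite S" using independent_bound[OF indep] by simp
  have sing: "{e} \<in> sets mu" for e :: 'a using assms(2) by simp
  have finsets: "F \<in> sets mu" if "finite F" for F :: "'a set"
    using assms(2) that by (simp add: finite_imp_closed)
  have msing: "measure mu {e} = 1/d" if "e \<in> S" for e
  proof -
    have "1/d = (\<integral>x. (x \<bullet> e)^2 \<partial>mu)" using iso Sunit that by simp
    also have "\<dots> = (\<integral>x. indicator {e} x \<partial>mu)"
    proof (rule integral_cong_AE)
      show "(\<lambda>x. (x \<bullet> e)^2) \<in> borel_measurable mu" unfolding mc by measurable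
      show "(\<lambda>x. indicator {e} x :: real) \<in> borel_measurable mu"
        using sing by (rule borel_measurable_indicator)
      show "AE x in mu. (x \<bullet> e)^2 = indicator {e} x"
        using AES
      proof (rule eventually_mono)
        fix x assume "x \<in> S"
        then show "(x \<bullet> e)^2 = indicator {e} x"
          using Sorth[of x e] Seq[of x e] that Sunit[of e] norm_eq_1[of e]
          by (cases "x = e") auto
      qed
    qed
    also have "\<dots> = measure mu {e}" using spc by simp
    finally show ?thesis by simp
  qed
  have "measure mu S = 1" using P.AE_in_set_eq_1[OF finsets[OF finS]] AES by simp
  moreover have "measure mu S = (\<Sum>e\<in>S. measure mu {e})"
    by (rule measure_eq_sum_singleton[OF finS sing]) (simp add: P.emeasure_eq_measure)
  ultimately have "real (card S) * (1/d) = 1" using msing by simp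
  hence cardS: "card S = DIM('a)" unfolding d_def by (simp add: field_simps)
  have spanS: "span S = UNIV"
  proof -
    have "UNIV \<subseteq> span S"
      by (rule card_ge_dim_independent[OF _ indep]) (auto simp: cardS)
    thus ?thesis by auto
  qed
  have meas: "emeasure mu A = ennreal (real (card (A \<inter> S)) / real DIM('a))"
    if A: "A \<in> sets mu" for A
  proof -
    have finAS: "finite (A \<inter> S)" using finS by simp
    have "emeasure mu A = emeasure mu (A \<inter> S)"
      by (rule emeasure_eq_AE) (use AES A finsets[OF finAS] in \<open>auto elim: eventually_mono\<close>)
    also have "\<dots> = (\<Sum>e\<in>A \<inter> S. emeasure mu {e})"
      by (rule emeasure_eq_sum_singleton[OF finAS sing])
    also have "\<dots> = (\<Sum>e\<in>A \<inter> S. ennreal (1/d))"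
      using msing by (intro sum.cong) (auto simp: P.emeasure_eq_measure)
    also have "\<dots> = of_nat (card (A \<inter> S)) * ennreal (1/d)" by simp
    also have "\<dots> = ennreal (real (card (A \<inter> S)) * (1/d))"
      using d1 ennreal_mult[of "real (card (A \<inter> S))" "1/d", symmetric]
      by (simp add: ennreal_of_nat_eq_real_of_nat)
    finally show ?thesis unfolding d_def by simp
  qed
  show ?thesis
    by (rule exI[of _ S]) (use finS cardS spanS pw Sunit meas in auto)
qed

end
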